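(* Let $(\mathcal V,\{C_n\}_n,e)$ be an operator system and let $p\in\mathcal V$ satisfy $0\le p\le e$. Then $\{C(p_n)\}_n$ is a (not necessarily proper) matrix ordering on $\mathcal V$, and $p$ is an Archimedean matrix order unit for $(\mathcal V,\{C(p_n)\}_n)$.
   Context: $e_n=I_n\otimes e$, $p_n=I_n\otimes p$, and $C(p_n)=\{x\in M_n(\mathcal V): x=x^*,\ \forall\epsilon>0\ \exists t>0 \text{ such that } x+\epsilon p_n+t(e_n-p_n)\in C_n\}$. A (not necessarily proper) matrix ordering is a sequence of cones $D_n\subseteq M_n(\mathcal V)_h$ with $\alpha^*D_n\alpha\subseteq D_m$ for all $\alpha\in M_{n,m}$. An element $u$ is an Archimedean matrix order unit for $\{D_n\}$ if for every hermitian $x\in M_n(\mathcal V)$ there is $r>0$ with $r u_n-x\in D_n$ (where $u_n=I_n\otimes u$), and $x+\epsilon u_n\in D_n$ for all $\epsilon>0$ implies $x\in D_n$. *)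

theory Defs
  imports Complex_Main
begin

definition cvs :: "(complex \<Rightarrow> 'v::ab_group_add \<Rightarrow> 'v) \<Rightarrow> bool" where
  "cvs sm \<longleftrightarrow> (\<forall>a b x. sm a (sm b x) = sm (a * b) x) \<and> (\<forall>x. sm 1 x = x)
     \<and> (\<forall>a x y. sm a (x + y) = sm a x + sm a y) \<and> (\<forall>a b x. sm (a + b) x = sm a x + sm b x)"

definition star_space :: "(complex \<Rightarrow> 'v::ab_group_add \<Rightarrow> 'v) \<Rightarrow> ('v \<Rightarrow> 'v) \<Rightarrow> bool" where
  "star_space sm st \<longleftrightarrow> cvs sm \<and> (\<forall>x. st (st x) = x) \<and> (\<forall>x y. st (x + y) = st x + st y)
     \<and> (\<forall>a x. st (sm a x) = sm (cnj a) (st x))"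

(* matrices over 'v: entries indexed from 0; an n x m matrix is zero outside {..<n} x {..<m} *)
type_synonym 'v mat = "nat \<Rightarrow> nat \<Rightarrow> 'v"

definition in_mat :: "nat \<Rightarrow> nat \<Rightarrow> 'a::zero mat \<Rightarrow> bool" where
  "in_mat n m x \<longleftrightarrow> (\<forall>i j. \<not> (i < n \<and> j < m) \<longrightarrow> x i j = 0)"

definition mherm :: "('v \<Rightarrow> 'v) \<Rightarrow> nat \<Rightarrow> 'v::zero mat \<Rightarrow> bool" where
  "mherm st n x \<longleftrightarrow> in_mat n n x \<and> (\<forall>i<n. \<forall>j<n. x i j = st (x j i))"

definition madd :: "'v::plus mat \<Rightarrow> 'v mat \<Rightarrow> 'v mat" where
  "madd x y = (\<lambda>i j. x i j + y i j)"

definition mrs :: "(complex \<Rightarrow> 'v \<Rightarrow> 'v) \<Rightarrow> real \<Rightarrow> 'v mat \<Rightarrow> 'v mat" where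
  "mrs sm t x = (\<lambda>i j. sm (complex_of_real t) (x i j))"

(* u_n = I_n \<otimes> u *)
definition amp :: "nat \<Rightarrow> 'v::zero \<Rightarrow> 'v mat" where
  "amp n u = (\<lambda>i j. if i = j \<and> i < n then u else 0)"

(* alpha^* x alpha for alpha in M_{n,m}(C), x in M_n(V); result in M_m(V) *)
definition congr :: "(complex \<Rightarrow> 'v::comm_monoid_add \<Rightarrow> 'v) \<Rightarrow> nat \<Rightarrow> nat \<Rightarrow> complex mat \<Rightarrow> 'v mat \<Rightarrow> 'v mat" where
  "congr sm n m \<alpha> x = (\<lambda>i j. if i < m \<and> j < m
      then (\<Sum>k<n. \<Sum>l<n. sm (cnj (\<alpha> k i) * \<alpha> l j) (x k l)) else 0)"

definition matrix_ordering :: "(complex \<Rightarrow> 'v::ab_group_add \<Rightarrow> 'v) \<Rightarrow> ('v \<Rightarrow> 'v) \<Rightarrow> (nat \<Rightarrow> 'v mat set) \<Rightarrow> bool" where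
  "matrix_ordering sm st D \<longleftrightarrow>
     (\<forall>n\<ge>1. D n \<subseteq> {x. mherm st n x} \<and> (\<lambda>i j. 0) \<in> D n
        \<and> (\<forall>x\<in>D n. \<forall>y\<in>D n. madd x y \<in> D n)
        \<and> (\<forall>x\<in>D n. \<forall>t::real. t \<ge> 0 \<longrightarrow> mrs sm t x \<in> D n))
   \<and> (\<forall>n\<ge>1. \<forall>m\<ge>1. \<forall>\<alpha>. in_mat n m \<alpha> \<longrightarrow> (\<forall>x\<in>D n. congr sm n m \<alpha> x \<in> D m))"

definition proper_ordering :: "(complex \<Rightarrow> 'v::ab_group_add \<Rightarrow> 'v) \<Rightarrow> (nat \<Rightarrow> 'v mat set) \<Rightarrow> bool" where
  "proper_ordering sm D \<longleftrightarrow> (\<forall>n\<ge>1. \<forall>x\<in>D n. mrs sm (-1) x \<in> D n \<longrightarrow> x = (\<lambda>i j. 0))"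

definition arch_unit :: "(complex \<Rightarrow> 'v::ab_group_add \<Rightarrow> 'v) \<Rightarrow> ('v \<Rightarrow> 'v) \<Rightarrow> (nat \<Rightarrow> 'v mat set) \<Rightarrow> 'v \<Rightarrow> bool" where
  "arch_unit sm st D u \<longleftrightarrow>
     (\<forall>n\<ge>1. \<forall>x. mherm st n x \<longrightarrow> (\<exists>r::real. r > 0 \<and> madd (mrs sm r (amp n u)) (mrs sm (-1) x) \<in> D n))
   \<and> (\<forall>n\<ge>1. \<forall>x. mherm st n x \<longrightarrow> (\<forall>\<epsilon>::real. \<epsilon> > 0 \<longrightarrow> madd x (mrs sm \<epsilon> (amp n u)) \<in> D n) \<longrightarrow> x \<in> D n)"

definition operator_system :: "(complex \<Rightarrow> 'v::ab_group_add \<Rightarrow> 'v) \<Rightarrow> ('v \<Rightarrow> 'v) \<Rightarrow> (nat \<Rightarrow> 'v mat set) \<Rightarrow> 'v \<Rightarrow> bool" where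
  "operator_system sm st C e \<longleftrightarrow> star_space sm st \<and> matrix_ordering sm st C
     \<and> proper_ordering sm C \<and> arch_unit sm st C e"

definition Cp :: "(complex \<Rightarrow> 'v::ab_group_add \<Rightarrow> 'v) \<Rightarrow> ('v \<Rightarrow> 'v) \<Rightarrow> (nat \<Rightarrow> 'v mat set) \<Rightarrow> 'v \<Rightarrow> 'v \<Rightarrow> nat \<Rightarrow> 'v mat set" where
  "Cp sm st C e p n = {x. mherm st n x \<and> (\<forall>\<epsilon>::real. \<epsilon> > 0 \<longrightarrow> (\<exists>t::real. t > 0 \<and>
      madd (madd x (mrs sm \<epsilon> (amp n p))) (mrs sm t (madd (amp n e) (mrs sm (-1) (amp n p)))) \<in> C n))}"

end

theory Submission
  imports Defs
begin

context fixes sm :: "complex \<Rightarrow> 'v::ab_group_add \<Rightarrow> 'v" assumes cv: "cvs sm"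
begin
lemma sm_assoc: "sm a (sm b x) = sm (a * b) x" using cv by (simp add: cvs_def)
lemma sm_one: "sm 1 x = x" using cv by (simp add: cvs_def)
lemma sm_add_right: "sm a (x + y) = sm a x + sm a y" using cv by (simp add: cvs_def)
lemma sm_add_left: "sm (a + b) x = sm a x + sm b x" using cv by (simp add: cvs_def)
lemma sm_zero_left: "sm 0 x = 0"
proof -
  have "sm (0+0) x = sm 0 x + sm 0 x" by (rule sm_add_left)
  then show ?thesis by simp
qed
lemma sm_zero_right: "sm a 0 = 0"
proof -
  have "sm a (0+0) = sm a 0 + sm a 0" by (rule sm_add_right)
  then show ?thesis by simp
qed
lemma sm_neg_left: "sm (- a) x = - sm a x"
proof -
  have "sm (a + - a) x = sm a x + sm (-a) x" by (rule sm_add_left)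
  then show ?thesis by (simp add: sm_zero_left eq_neg_iff_add_eq_0 add.commute)
qed
lemma sm_neg_right: "sm a (- x) = - sm a x"
proof -
  have "sm a (x + - x) = sm a x + sm a (-x)" by (rule sm_add_right)
  then show ?thesis by (simp add: sm_zero_right eq_neg_iff_add_eq_0 add.commute)
qed
lemma sm_m1: "sm (-1) x = - x" using sm_neg_left[of 1 x] by (simp add: sm_one)
lemma sm_diff_right: "sm a (x - y) = sm a x - sm a y"
  using sm_add_right[of a x "-y"] by (simp add: sm_neg_right)
lemma sm_diff_left: "sm (a - b) x = sm a x - sm b x"
  using sm_add_left[of a "-b" x] by (simp add: sm_neg_left)
lemma sm_sum_left: "sm (sum f S) x = (\<Sum>s\<in>S. sm (f s) x)"
  by (induct S rule: infinite_finite_induct) (auto simp: sm_zero_left sm_add_left)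
lemma sm_sum_right: "sm a (sum f S) = (\<Sum>s\<in>S. sm a (f s))"
  by (induct S rule: infinite_finite_induct) (auto simp: sm_zero_right sm_add_right)
end


lemma mrs_m1: "cvs sm \<Longrightarrow> mrs sm (-1) x = (\<lambda>i j. - x i j)"
  by (simp add: mrs_def sm_m1)
lemma madd_amp: "madd (amp n a) (amp n b) = amp n (a + (b::'v::ab_group_add))"
  by (intro ext) (auto simp: madd_def amp_def)
lemma amp_sub: "cvs sm \<Longrightarrow> madd (amp n e) (mrs sm (-1) (amp n p)) = amp n (e - p)"
  by (intro ext) (auto simp: madd_def amp_def mrs_m1)
lemma mrs_madd: "cvs sm \<Longrightarrow> mrs sm t (madd x y) = madd (mrs sm t x) (mrs sm t y)"
  by (simp add: mrs_def madd_def sm_add_right)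
lemma mrs_mrs: "cvs sm \<Longrightarrow> mrs sm s (mrs sm t x) = mrs sm (s * t) x"
  by (simp add: mrs_def sm_assoc)
lemma mrs_addsc: "cvs sm \<Longrightarrow> mrs sm (s + t) x = madd (mrs sm s x) (mrs sm t x)"
  by (simp add: mrs_def madd_def sm_add_left)
lemma mrs_zero: "cvs sm \<Longrightarrow> mrs sm 0 x = (\<lambda>i j. 0)"
  by (simp add: mrs_def sm_zero_left)
lemma mrs_one: "cvs sm \<Longrightarrow> mrs sm 1 x = x"
  by (simp add: mrs_def sm_one)
lemma madd_zero: "madd (\<lambda>i j. 0) x = (x::'v::ab_group_add mat)" "madd x (\<lambda>i j. 0) = x"
  by (auto simp: madd_def intro!: ext)
lemma madd_ac: "madd (madd x y) z = madd x (madd y (z::'v::ab_group_add mat))" "madd x y = madd y x"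
  "madd x (madd y z) = madd y (madd x z)"
  by (auto simp: madd_def algebra_simps intro!: ext)

context fixes sm :: "complex \<Rightarrow> 'v::ab_group_add \<Rightarrow> 'v" and st assumes ss: "star_space sm st"
begin
lemma ss_cvs: "cvs sm" using ss by (simp add: star_space_def)
lemma st_add: "st (x + y) = st x + st y" using ss by (simp add: star_space_def)
lemma st_st: "st (st x) = x" using ss by (simp add: star_space_def)
lemma st_sm: "st (sm a x) = sm (cnj a) (st x)" using ss by (simp add: star_space_def)
lemma st_zero: "st 0 = 0"
proof -
  have "st (0+0) = st 0 + st 0" by (rule st_add)
  then show ?thesis by simp
qed
lemma st_neg: "st (- x) = - st x"
proof -
  have "st (x + - x) = st x + st (-x)" by (rule st_add)
  then show ?thesis by (simp add: st_zero eq_neg_iff_add_eq_0 add.commute)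
qed
lemma st_sum: "st (sum f S) = (\<Sum>s\<in>S. st (f s))"
  by (induct S rule: infinite_finite_induct) (auto simp: st_zero st_add)

lemma mherm_madd: assumes hx: "mherm st n x" and hy: "mherm st n y" shows "mherm st n (madd x y)"
  unfolding mherm_def
proof (intro conjI allI impI)
  show "in_mat n n (madd x y)" using hx hy by (auto simp: mherm_def in_mat_def madd_def)
  fix i j assume ij: "i < n" "j < n"
  have "x i j = st (x j i)" "y i j = st (y j i)" using hx hy ij unfolding mherm_def by blast+
  then show "madd x y i j = st (madd x y j i)" by (simp add: madd_def st_add)
qed
lemma mherm_mrs: assumes hx: "mherm st n x" shows "mherm st n (mrs sm t x)"
  unfolding mherm_def
proof (intro conjI allI impI)
  show "in_mat n n (mrs sm t x)" using hx by (auto simp: mherm_def in_mat_def mrs_def sm_zero_right[OF ss_cvs])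
  fix i j assume ij: "i < n" "j < n"
  have "x i j = st (x j i)" using hx ij unfolding mherm_def by blast+
  then show "mrs sm t x i j = st (mrs sm t x j i)" by (simp add: mrs_def st_sm)
qed
lemma mherm_amp: "st q = q \<Longrightarrow> mherm st n (amp n q)"
  by (auto simp: mherm_def in_mat_def amp_def st_zero)
lemma mherm_zero: "mherm st n (\<lambda>i j. 0)"
  by (auto simp: mherm_def in_mat_def st_zero)
lemma mherm_congr: "mherm st n x \<Longrightarrow> mherm st m (congr sm n m \<alpha> x)"
proof -
  assume h: "mherm st n x"
  have H: "congr sm n m \<alpha> x i j = st (congr sm n m \<alpha> x j i)" if "i < m" "j < m" for i j
  proof -
    have "st (congr sm n m \<alpha> x j i) = (\<Sum>k<n. \<Sum>l<n. sm (\<alpha> k j * cnj (\<alpha> l i)) (st (x k l)))"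
      using that by (simp add: congr_def st_sum st_sm)
    also have "\<dots> = (\<Sum>k<n. \<Sum>l<n. sm (\<alpha> k j * cnj (\<alpha> l i)) (x l k))"
    proof (intro sum.cong refl)
      fix k l assume "k \<in> {..<n}" "l \<in> {..<n}"
      then have "x l k = st (x k l)" using h unfolding mherm_def by blast
      then show "sm (\<alpha> k j * cnj (\<alpha> l i)) (st (x k l)) = sm (\<alpha> k j * cnj (\<alpha> l i)) (x l k)" by simp
    qed
    also have "\<dots> = (\<Sum>l<n. \<Sum>k<n. sm (cnj (\<alpha> l i) * \<alpha> k j) (x l k))"
      by (subst sum.swap) (simp add: mult.commute)
    finally show ?thesis using that by (simp add: congr_def)
  qed
  have "in_mat m m (congr sm n m \<alpha> x)" by (auto simp: in_mat_def congr_def)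
  then show ?thesis unfolding mherm_def
    by (intro conjI allI impI) (assumption, rule H)
qed
end


lemma pair_sum:
  fixes z :: "nat \<Rightarrow> complex"
  assumes "i < m" "j < m"
  shows "(\<Sum>a<m. \<Sum>b<m. cnj ((if i=a then z a else 0) - (if i=b then z b else 0)) * ((if j=a then z a else 0) - (if j=b then z b else 0)))
    = 2 * (of_nat m * (if i = j then cnj (z i) * z i else 0)) - 2 * (cnj (z i) * z j)"
proof -
  define A where "A = (\<lambda>l a. if l = a then z a else 0)"
  have e: "cnj ((if i=a then z a else 0) - (if i=b then z b else 0)) * ((if j=a then z a else 0) - (if j=b then z b else 0))
     = cnj (A i a) * A j a - cnj (A i a) * A j b - cnj (A i b) * A j a + cnj (A i b) * A j b" for a b
    by (simp add: A_def algebra_simps)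
  have s1: "(\<Sum>a<m. cnj (A i a) * A j a) = (if i = j then cnj (z i) * z i else 0)"
  proof -
    have "(\<Sum>a<m. cnj (A i a) * A j a) = (\<Sum>a<m. if a = i then (if i = j then cnj (z i) * z i else 0) else 0)"
      by (intro sum.cong refl) (auto simp: A_def)
    then show ?thesis using assms by simp
  qed
  have s2: "(\<Sum>a<m. A l a) = z l" if "l < m" for l
  proof -
    have "(\<Sum>a<m. A l a) = (\<Sum>a<m. if a = l then z l else 0)"
      by (intro sum.cong refl) (auto simp: A_def)
    then show ?thesis using that by simp
  qed
  have s2c: "(\<Sum>a<m. cnj (A l a)) = cnj (z l)" if "l < m" for l
    using s2[OF that] by (metis cnj_sum)
  have "(\<Sum>a<m. \<Sum>b<m. cnj (A i a) * A j a - cnj (A i a) * A j b - cnj (A i b) * A j a + cnj (A i b) * A j b)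
     = of_nat m * (\<Sum>a<m. cnj (A i a) * A j a) - (\<Sum>a<m. cnj (A i a)) * (\<Sum>b<m. A j b)
       - (\<Sum>b<m. cnj (A i b)) * (\<Sum>a<m. A j a) + of_nat m * (\<Sum>b<m. cnj (A i b) * A j b)"
  proof -
    have d1: "(\<Sum>a<m. \<Sum>b<m. cnj (A i a) * A j a) = of_nat m * (\<Sum>a<m. cnj (A i a) * A j a)"
      by (simp add: sum_distrib_left mult.commute)
    have d2: "(\<Sum>a<m. \<Sum>b<m. cnj (A i a) * A j b) = (\<Sum>a<m. cnj (A i a)) * (\<Sum>b<m. A j b)"
      by (simp add: sum_product)
    have d3: "(\<Sum>a<m. \<Sum>b<m. cnj (A i b) * A j a) = (\<Sum>b<m. cnj (A i b)) * (\<Sum>a<m. A j a)"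
      by (subst sum.swap) (simp add: sum_product)
    have d4: "(\<Sum>a<m. \<Sum>b<m. cnj (A i b) * A j b) = of_nat m * (\<Sum>b<m. cnj (A i b) * A j b)"
      by simp
    show ?thesis by (simp only: sum.distrib sum_subtractf d1 d2 d3 d4)
  qed
  also have "\<dots> = 2 * (of_nat m * (if i = j then cnj (z i) * z i else 0)) - 2 * (cnj (z i) * z j)"
    using s1 s2 s2c assms by simp
  finally have X: "(\<Sum>a<m. \<Sum>b<m. cnj (A i a) * A j a - cnj (A i a) * A j b - cnj (A i b) * A j a + cnj (A i b) * A j b) = 2 * (of_nat m * (if i = j then cnj (z i) * z i else 0)) - 2 * (cnj (z i) * z j)" .
  show ?thesis unfolding e by (rule X)
qed

definition kr :: "(complex \<Rightarrow> 'v::ab_group_add \<Rightarrow> 'v) \<Rightarrow> nat \<Rightarrow> 'v \<Rightarrow> complex mat \<Rightarrow> 'v mat" where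
  "kr sm m q H = (\<lambda>i j. if i < m \<and> j < m then sm (H i j) q else 0)"

definition gram :: "nat \<Rightarrow> complex mat \<Rightarrow> complex mat" where
  "gram n \<alpha> = (\<lambda>i j. \<Sum>k<n. cnj (\<alpha> k i) * \<alpha> k j)"

context fixes sm :: "complex \<Rightarrow> 'v::ab_group_add \<Rightarrow> 'v" assumes cv: "cvs sm"
begin
lemma kr_add: "kr sm m q (\<lambda>i j. H1 i j + H2 i j) = madd (kr sm m q H1) (kr sm m q H2)"
  by (intro ext) (simp add: kr_def madd_def sm_add_left[OF cv])
lemma kr_rank1: "congr sm 1 m (\<lambda>k i. if k = 0 \<and> i < m then w i else 0) (amp 1 q)
   = kr sm m q (\<lambda>i j. cnj (w i) * w j)"
  by (intro ext) (simp add: kr_def congr_def amp_def)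
lemma congr_amp: "congr sm n m \<alpha> (amp n q) = kr sm m q (gram n \<alpha>)"
proof (intro ext)
  fix i j
  have "(\<Sum>k<n. \<Sum>l<n. sm (cnj (\<alpha> k i) * \<alpha> l j) (amp n q k l)) = (\<Sum>k<n. sm (cnj (\<alpha> k i) * \<alpha> k j) q)"
  proof (intro sum.cong refl)
    fix k assume "k \<in> {..<n}"
    then have "(\<Sum>l<n. sm (cnj (\<alpha> k i) * \<alpha> l j) (amp n q k l)) = (\<Sum>l<n. if k = l then sm (cnj (\<alpha> k i) * \<alpha> l j) q else 0)"
      by (intro sum.cong refl) (auto simp: amp_def sm_zero_right[OF cv])
    also have "\<dots> = sm (cnj (\<alpha> k i) * \<alpha> k j) q" using \<open>k \<in> {..<n}\<close> by simp
    finally show "(\<Sum>l<n. sm (cnj (\<alpha> k i) * \<alpha> l j) (amp n q k l)) = sm (cnj (\<alpha> k i) * \<alpha> k j) q" .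
  qed
  then show "congr sm n m \<alpha> (amp n q) i j = kr sm m q (gram n \<alpha>) i j"
    by (simp add: congr_def kr_def gram_def sm_sum_left[OF cv])
qed
lemma congr_madd: "congr sm n m \<alpha> (madd x y) = madd (congr sm n m \<alpha> x) (congr sm n m \<alpha> y)"
  by (intro ext) (simp add: congr_def madd_def sm_add_right[OF cv] sum.distrib)
lemma congr_mrs: "congr sm n m \<alpha> (mrs sm t x) = mrs sm t (congr sm n m \<alpha> x)"
  by (intro ext) (simp add: congr_def mrs_def sm_assoc[OF cv] sm_sum_right[OF cv] sm_zero_right[OF cv] mult.commute)
end

context fixes sm :: "complex \<Rightarrow> 'v::ab_group_add \<Rightarrow> 'v" and st C
  assumes cv: "cvs sm" and mo: "matrix_ordering sm st C"
begin
lemma C_herm: "n \<ge> 1 \<Longrightarrow> x \<in> C n \<Longrightarrow> mherm st n x" using mo by (auto simp: matrix_ordering_def)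
lemma C_zero: "n \<ge> 1 \<Longrightarrow> (\<lambda>i j. 0) \<in> C n" using mo by (auto simp: matrix_ordering_def)
lemma C_add: "n \<ge> 1 \<Longrightarrow> x \<in> C n \<Longrightarrow> y \<in> C n \<Longrightarrow> madd x y \<in> C n" using mo by (auto simp: matrix_ordering_def)
lemma C_scale: "n \<ge> 1 \<Longrightarrow> x \<in> C n \<Longrightarrow> t \<ge> 0 \<Longrightarrow> mrs sm t x \<in> C n" using mo by (auto simp: matrix_ordering_def)
lemma C_congr: "n \<ge> 1 \<Longrightarrow> m \<ge> 1 \<Longrightarrow> in_mat n m \<alpha> \<Longrightarrow> x \<in> C n \<Longrightarrow> congr sm n m \<alpha> x \<in> C m"
  using mo unfolding matrix_ordering_def by blast

lemma C_gram_sum: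
  assumes "finite S" "m \<ge> 1" "amp 1 q \<in> C 1"
  shows "kr sm m q (\<lambda>i j. \<Sum>s\<in>S. cnj (w s i) * w s j) \<in> C m"
  using assms(1)
proof (induct S rule: finite_induct)
  case empty
  have "kr sm m q (\<lambda>i j. \<Sum>s\<in>{}. cnj (w s i) * w s j) = (\<lambda>i j. 0)"
    by (intro ext) (simp add: kr_def sm_zero_left[OF cv])
  then show ?case using C_zero assms by simp
next
  case (insert s S)
  have "kr sm m q (\<lambda>i j. \<Sum>s\<in>insert s S. cnj (w s i) * w s j)
     = madd (kr sm m q (\<lambda>i j. cnj (w s i) * w s j)) (kr sm m q (\<lambda>i j. \<Sum>s\<in>S. cnj (w s i) * w s j))"
    using insert by (simp add: kr_add[OF cv, symmetric])
  moreover have "kr sm m q (\<lambda>i j. cnj (w s i) * w s j) \<in> C m"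
    unfolding kr_rank1[OF cv, symmetric]
    by (rule C_congr) (use assms in \<open>auto simp: in_mat_def\<close>)
  ultimately show ?case using insert C_add assms by simp
qed

lemma amp_C: assumes "m \<ge> 1" "amp 1 q \<in> C 1" shows "amp m q \<in> C m"
proof -
  have "kr sm m q (\<lambda>i j. \<Sum>s\<in>{..<m}. cnj (if i = s then 1 else 0) * (if j = s then 1 else 0)) \<in> C m"
    by (rule C_gram_sum) (use assms in auto)
  moreover have "kr sm m q (\<lambda>i j. \<Sum>s\<in>{..<m}. cnj (if i = s then 1 else 0) * (if j = s then 1 else 0)) = amp m q"
  proof (intro ext)
    fix i j :: nat
    have "(\<Sum>s\<in>{..<m}. cnj (if i = s then 1 else 0) * (if j = s then 1 else 0))
        = (\<Sum>s\<in>{..<m}. if s = i then (if j = i then 1 else 0) else (0::complex))"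
      by (intro sum.cong refl) auto
    then show "kr sm m q (\<lambda>i j. \<Sum>s\<in>{..<m}. cnj (if i = s then 1 else 0) * (if j = s then 1 else 0)) i j = amp m q i j"
      by (auto simp: kr_def amp_def sm_one[OF cv] sm_zero_left[OF cv])
  qed
  ultimately show ?thesis by simp
qed
end


lemma kr_cong: "(\<And>i j. i < m \<Longrightarrow> j < m \<Longrightarrow> H i j = H' i j) \<Longrightarrow> kr sm m q H = kr sm m q H'"
  by (intro ext) (simp add: kr_def)

context fixes sm :: "complex \<Rightarrow> 'v::ab_group_add \<Rightarrow> 'v" and st C
  assumes cv: "cvs sm" and mo: "matrix_ordering sm st C"
begin
lemma mrs_kr: "mrs sm t (kr sm m q H) = kr sm m q (\<lambda>i j. of_real t * H i j)"
  by (intro ext) (simp add: kr_def mrs_def sm_assoc[OF cv] sm_zero_right[OF cv])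
lemma target_kr: "madd (mrs sm K (amp m q)) (mrs sm (-1) (kr sm m q G)) = kr sm m q (\<lambda>i j. (if i = j then of_real K else 0) - G i j)"
  by (intro ext) (auto simp: kr_def mrs_def madd_def amp_def sm_m1[OF cv] sm_zero_right[OF cv] sm_diff_left[OF cv] sm_zero_left[OF cv])

lemma gram_bound:
  assumes m1: "m \<ge> 1" and q1: "amp 1 q \<in> C 1"
  shows "madd (mrs sm (real m * (\<Sum>l<m. \<Sum>k<n. (cmod (\<alpha> k l))\<^sup>2) + 1) (amp m q)) (mrs sm (-1) (kr sm m q (gram n \<alpha>))) \<in> C m"
proof -
  define D where "D l = (\<Sum>k<n. (cmod (\<alpha> k l))\<^sup>2)" for l
  define K where "K = real m * (\<Sum>l<m. D l) + 1"
  have Dnn: "D l \<ge> 0" for l unfolding D_def by (simp add: sum_nonneg)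
  have DK: "real m * D l \<le> K" if "l < m" for l
  proof -
    have "D l \<le> (\<Sum>l<m. D l)" by (rule member_le_sum) (use that Dnn in auto)
    then have "real m * D l \<le> real m * (\<Sum>l<m. D l)" by (simp add: mult_left_mono)
    then show ?thesis unfolding K_def by simp
  qed
  define w1 :: "nat \<times> nat \<times> nat \<Rightarrow> nat \<Rightarrow> complex" where
    "w1 = (\<lambda>s l. (if l = fst (snd s) then \<alpha> (fst s) (fst (snd s)) else 0) - (if l = snd (snd s) then \<alpha> (fst s) (snd (snd s)) else 0))"
  define w2 :: "nat \<Rightarrow> nat \<Rightarrow> complex" where
    "w2 = (\<lambda>s l. if l = s then complex_of_real (sqrt (2 * (K - real m * D s))) else 0)"
  define H1 where "H1 = (\<lambda>i j. \<Sum>s\<in>{..<n} \<times> {..<m} \<times> {..<m}. cnj (w1 s i) * w1 s j)"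
  define H2 where "H2 = (\<lambda>i j. \<Sum>s\<in>{..<m}. cnj (w2 s i) * w2 s j)"
  have c1: "kr sm m q H1 \<in> C m" unfolding H1_def by (rule C_gram_sum[OF cv mo]) (use m1 q1 in auto)
  have c2: "kr sm m q H2 \<in> C m" unfolding H2_def by (rule C_gram_sum[OF cv mo]) (use m1 q1 in auto)
  have c3: "mrs sm (1/2) (kr sm m q (\<lambda>i j. H1 i j + H2 i j)) \<in> C m"
    unfolding kr_add[OF cv] using c1 c2 m1 by (intro C_scale[OF cv mo] C_add[OF cv mo]) auto
  have eq: "of_real (1/2) * (H1 i j + H2 i j) = (if i = j then of_real K else 0) - gram n \<alpha> i j"
    if ij: "i < m" "j < m" for i j
  proof -
    have "H1 i j = (\<Sum>k<n. \<Sum>a<m. \<Sum>b<m. cnj (w1 (k,a,b) i) * w1 (k,a,b) j)"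
      unfolding H1_def by (simp add: sum.cartesian_product)
    also have "\<dots> = (\<Sum>k<n. 2 * (of_nat m * (if i = j then cnj (\<alpha> k i) * \<alpha> k i else 0)) - 2 * (cnj (\<alpha> k i) * \<alpha> k j))"
      unfolding w1_def fst_conv snd_conv by (intro sum.cong refl pair_sum[OF ij])
    also have "\<dots> = 2 * of_nat m * (if i = j then of_real (D i) else 0) - 2 * gram n \<alpha> i j"
    proof -
      have nsq: "(complex_of_real (cmod z))\<^sup>2 = z * cnj z" for z
        by (metis complex_norm_square of_real_power)
      show ?thesis
        by (simp add: sum_subtractf sum_distrib_left gram_def D_def nsq mult.commute mult.left_commute)
    qed
    finally have h1: "H1 i j = 2 * of_nat m * (if i = j then of_real (D i) else 0) - 2 * gram n \<alpha> i j" .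
    have "H2 i j = (\<Sum>s<m. if s = i then (if i = j then of_real (2 * (K - real m * D i)) else 0) else 0)"
      unfolding H2_def
    proof (intro sum.cong refl)
      fix s assume "s \<in> {..<m}"
      have "0 \<le> 2 * (K - real m * D i)" using DK[OF ij(1)] by simp
      then show "cnj (w2 s i) * w2 s j = (if s = i then (if i = j then of_real (2 * (K - real m * D i)) else 0) else 0)"
        unfolding w2_def by (auto simp flip: of_real_mult)
    qed
    also have "\<dots> = (if i = j then of_real (2 * (K - real m * D i)) else 0)" using ij by simp
    finally have h2: "H2 i j = (if i = j then of_real (2 * (K - real m * D i)) else 0)" .
    show ?thesis unfolding h1 h2 by (auto simp: field_simps)
  qed
  have "madd (mrs sm K (amp m q)) (mrs sm (-1) (kr sm m q (gram n \<alpha>))) = mrs sm (1/2) (kr sm m q (\<lambda>i j. H1 i j + H2 i j))"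
    unfolding target_kr unfolding mrs_kr by (rule kr_cong) (rule eq[symmetric])
  then show ?thesis using c3 unfolding K_def D_def by simp
qed
end


theorem proposition4p7:
  fixes sm :: "complex \<Rightarrow> 'v::ab_group_add \<Rightarrow> 'v" and st :: "'v \<Rightarrow> 'v"
    and C :: "nat \<Rightarrow> 'v mat set" and e p :: 'v
  assumes "operator_system sm st C e"
    and "amp 1 p \<in> C 1"
    and "madd (amp 1 e) (mrs sm (-1) (amp 1 p)) \<in> C 1"
  shows "matrix_ordering sm st (Cp sm st C e p) \<and> arch_unit sm st (Cp sm st C e p) p"
proof -
  have ss: "star_space sm st" and mo: "matrix_ordering sm st C" and au: "arch_unit sm st C e"
    using assms(1) by (auto simp: operator_system_def)
  have cv: "cvs sm" by (rule ss_cvs[OF ss])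
  have q1: "amp 1 (e - p) \<in> C 1" using assms(3) by (simp add: amp_sub[OF cv])
  have pC: "amp n p \<in> C n" if "n \<ge> 1" for n by (rule amp_C[OF cv mo that assms(2)])
  have qC: "amp n (e - p) \<in> C n" if "n \<ge> 1" for n by (rule amp_C[OF cv mo that q1])
  have PQ: "madd (amp n p) (amp n (e - p)) = amp n e" for n by (simp add: madd_amp)
  have eC: "amp n e \<in> C n" if "n \<ge> 1" for n
    using C_add[OF cv mo that pC[OF that] qC[OF that]] by (simp add: PQ)
  have pherm: "st p = p"
  proof -
    have "mherm st 1 (amp 1 p)" by (rule C_herm[OF cv mo _ assms(2)]) simp
    then have "amp 1 p 0 0 = st (amp 1 p 0 0)" unfolding mherm_def by blast
    then show ?thesis by (simp add: amp_def)
  qed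
  have Cp_iff: "x \<in> Cp sm st C e p n \<longleftrightarrow> mherm st n x \<and> (\<forall>\<epsilon>::real. \<epsilon> > 0 \<longrightarrow> (\<exists>t::real. t > 0 \<and>
      madd (madd x (mrs sm \<epsilon> (amp n p))) (mrs sm t (amp n (e - p))) \<in> C n))" for x n
    by (simp add: Cp_def amp_sub[OF cv])
  have zeroCp: "(\<lambda>i j. 0) \<in> Cp sm st C e p n" if n1: "n \<ge> 1" for n
    unfolding Cp_iff
  proof (intro conjI allI impI)
    show "mherm st n (\<lambda>i j. 0)" by (rule mherm_zero[OF ss])
    fix \<epsilon> :: real assume "\<epsilon> > 0"
    have "madd (madd (\<lambda>i j. 0) (mrs sm \<epsilon> (amp n p))) (mrs sm \<epsilon> (amp n (e - p))) = mrs sm \<epsilon> (amp n e)"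
      by (simp add: madd_zero mrs_madd[OF cv, symmetric] PQ)
    moreover have "mrs sm \<epsilon> (amp n e) \<in> C n" using C_scale[OF cv mo n1 eC[OF n1]] \<open>\<epsilon> > 0\<close> by simp
    ultimately show "\<exists>t>0. madd (madd (\<lambda>i j. 0) (mrs sm \<epsilon> (amp n p))) (mrs sm t (amp n (e - p))) \<in> C n"
      using \<open>\<epsilon> > 0\<close> by metis
  qed
  have half: "mrs sm \<epsilon> X = madd (mrs sm (\<epsilon>/2) X) (mrs sm (\<epsilon>/2) X)" for \<epsilon> X
    using mrs_addsc[OF cv, of "\<epsilon>/2" "\<epsilon>/2" X] by simp
  have MO: "matrix_ordering sm st (Cp sm st C e p)"
    unfolding matrix_ordering_def
  proof (intro conjI allI impI ballI)
    fix n :: nat assume n1: "n \<ge> 1"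
    show "Cp sm st C e p n \<subseteq> {x. mherm st n x}" using Cp_iff by auto
    show "(\<lambda>i j. 0) \<in> Cp sm st C e p n" by (rule zeroCp[OF n1])
    fix x assume x: "x \<in> Cp sm st C e p n"
    {
      fix y assume y: "y \<in> Cp sm st C e p n"
      show "madd x y \<in> Cp sm st C e p n"
        unfolding Cp_iff
      proof (intro conjI allI impI)
        show "mherm st n (madd x y)" using x y Cp_iff mherm_madd[OF ss] by blast
        fix \<epsilon> :: real assume ep: "\<epsilon> > 0"
        obtain t1 where t1: "t1 > 0" "madd (madd x (mrs sm (\<epsilon>/2) (amp n p))) (mrs sm t1 (amp n (e - p))) \<in> C n"
          using x ep unfolding Cp_iff by (meson half_gt_zero)
        obtain t2 where t2: "t2 > 0" "madd (madd y (mrs sm (\<epsilon>/2) (amp n p))) (mrs sm t2 (amp n (e - p))) \<in> C n"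
          using y ep unfolding Cp_iff by (meson half_gt_zero)
        have "madd (madd (madd x y) (mrs sm \<epsilon> (amp n p))) (mrs sm (t1 + t2) (amp n (e - p)))
          = madd (madd (madd x (mrs sm (\<epsilon>/2) (amp n p))) (mrs sm t1 (amp n (e - p))))
                 (madd (madd y (mrs sm (\<epsilon>/2) (amp n p))) (mrs sm t2 (amp n (e - p))))"
          by (subst half, subst mrs_addsc[OF cv]) (simp add: madd_ac)
        then show "\<exists>t>0. madd (madd (madd x y) (mrs sm \<epsilon> (amp n p))) (mrs sm t (amp n (e - p))) \<in> C n"
          using C_add[OF cv mo n1 t1(2) t2(2)] t1(1) t2(1) by (metis add_pos_pos)
      qed
    }
    fix t :: real assume t0: "t \<ge> 0"
    show "mrs sm t x \<in> Cp sm st C e p n"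
    proof (cases "t = 0")
      case True
      then show ?thesis using zeroCp[OF n1] by (simp add: mrs_zero[OF cv])
    next
      case False
      then have tp: "t > 0" using t0 by simp
      show ?thesis unfolding Cp_iff
      proof (intro conjI allI impI)
        show "mherm st n (mrs sm t x)" using x Cp_iff mherm_mrs[OF ss] by blast
        fix \<epsilon> :: real assume ep: "\<epsilon> > 0"
        obtain s where s: "s > 0" "madd (madd x (mrs sm (\<epsilon>/t) (amp n p))) (mrs sm s (amp n (e - p))) \<in> C n"
          using x ep tp unfolding Cp_iff by (meson divide_pos_pos)
        have tt: "t * (\<epsilon> / t) = \<epsilon>" using tp by simp
        have "mrs sm t (madd (madd x (mrs sm (\<epsilon>/t) (amp n p))) (mrs sm s (amp n (e - p))))
           = madd (madd (mrs sm t x) (mrs sm \<epsilon> (amp n p))) (mrs sm (t * s) (amp n (e - p)))"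
          by (simp only: mrs_madd[OF cv] mrs_mrs[OF cv] tt)
        moreover have "mrs sm t (madd (madd x (mrs sm (\<epsilon>/t) (amp n p))) (mrs sm s (amp n (e - p)))) \<in> C n"
          using C_scale[OF cv mo n1 s(2) t0] .
        ultimately show "\<exists>t'>0. madd (madd (mrs sm t x) (mrs sm \<epsilon> (amp n p))) (mrs sm t' (amp n (e - p))) \<in> C n"
          using tp s(1) by (metis mult_pos_pos)
      qed
    qed
  next
    fix n m :: nat and \<alpha> :: "complex mat" and x
    assume n1: "n \<ge> 1" and m1: "m \<ge> 1" and al: "in_mat n m \<alpha>" and x: "x \<in> Cp sm st C e p n"
    define K where "K = real m * (\<Sum>l<m. \<Sum>k<n. (cmod (\<alpha> k l))\<^sup>2) + 1"
    have Kp: "K > 0" unfolding K_def by (simp add: sum_nonneg add_nonneg_pos)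
    define G where "G = gram n \<alpha>"
    have GBp: "madd (mrs sm K (amp m p)) (mrs sm (-1) (kr sm m p G)) \<in> C m"
      unfolding K_def G_def by (rule gram_bound[OF cv mo m1 assms(2)])
    have GBq: "madd (mrs sm K (amp m (e - p))) (mrs sm (-1) (kr sm m (e - p) G)) \<in> C m"
      unfolding K_def G_def by (rule gram_bound[OF cv mo m1 q1])
    show "congr sm n m \<alpha> x \<in> Cp sm st C e p m"
      unfolding Cp_iff
    proof (intro conjI allI impI)
      show "mherm st m (congr sm n m \<alpha> x)" using x Cp_iff mherm_congr[OF ss] by blast
      fix \<epsilon> :: real assume ep: "\<epsilon> > 0"
      define \<delta> where "\<delta> = \<epsilon> / K"
      have dp: "\<delta> > 0" unfolding \<delta>_def using ep Kp by simp
      have dK: "\<delta> * K = \<epsilon>" unfolding \<delta>_def using Kp by simp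
      obtain t where t: "t > 0" "madd (madd x (mrs sm \<delta> (amp n p))) (mrs sm t (amp n (e - p))) \<in> C n"
        using x dp unfolding Cp_iff by blast
      have c1: "congr sm n m \<alpha> (madd (madd x (mrs sm \<delta> (amp n p))) (mrs sm t (amp n (e - p)))) \<in> C m"
        by (rule C_congr[OF cv mo n1 m1 al t(2)])
      have c1': "congr sm n m \<alpha> (madd (madd x (mrs sm \<delta> (amp n p))) (mrs sm t (amp n (e - p))))
         = madd (madd (congr sm n m \<alpha> x) (mrs sm \<delta> (kr sm m p G))) (mrs sm t (kr sm m (e - p) G))"
        by (simp add: congr_madd[OF cv] congr_mrs[OF cv] congr_amp[OF cv] G_def)
      have c2: "madd (mrs sm \<delta> (madd (mrs sm K (amp m p)) (mrs sm (-1) (kr sm m p G))))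
                     (mrs sm t (madd (mrs sm K (amp m (e - p))) (mrs sm (-1) (kr sm m (e - p) G)))) \<in> C m"
        using dp t(1) by (intro C_add[OF cv mo m1] C_scale[OF cv mo m1] GBp GBq) auto
      have c2': "madd (mrs sm \<delta> (madd (mrs sm K (amp m p)) (mrs sm (-1) (kr sm m p G))))
                     (mrs sm t (madd (mrs sm K (amp m (e - p))) (mrs sm (-1) (kr sm m (e - p) G))))
          = madd (madd (mrs sm \<epsilon> (amp m p)) (mrs sm \<delta> (mrs sm (-1) (kr sm m p G))))
                 (madd (mrs sm (t * K) (amp m (e - p))) (mrs sm t (mrs sm (-1) (kr sm m (e - p) G))))"
        by (simp only: mrs_madd[OF cv] mrs_mrs[OF cv] dK)
      have fin: "madd (madd (madd (congr sm n m \<alpha> x) (mrs sm \<delta> (kr sm m p G))) (mrs sm t (kr sm m (e - p) G)))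
            (madd (madd (mrs sm \<epsilon> (amp m p)) (mrs sm \<delta> (mrs sm (-1) (kr sm m p G))))
                 (madd (mrs sm (t * K) (amp m (e - p))) (mrs sm t (mrs sm (-1) (kr sm m (e - p) G)))))
          = madd (madd (congr sm n m \<alpha> x) (mrs sm \<epsilon> (amp m p))) (mrs sm (t * K) (amp m (e - p)))"
        by (intro ext) (simp add: madd_def mrs_def sm_m1[OF cv] sm_neg_right[OF cv] algebra_simps)
      have "madd (madd (congr sm n m \<alpha> x) (mrs sm \<epsilon> (amp m p))) (mrs sm (t * K) (amp m (e - p))) \<in> C m"
        using C_add[OF cv mo m1 c1 c2] unfolding c1' c2' fin .
      then show "\<exists>t'>0. madd (madd (congr sm n m \<alpha> x) (mrs sm \<epsilon> (amp m p))) (mrs sm t' (amp m (e - p))) \<in> C m"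
        using t(1) Kp by (metis mult_pos_pos)
    qed
  qed
  have AU: "arch_unit sm st (Cp sm st C e p) p"
    unfolding arch_unit_def
  proof (intro conjI allI impI)
    fix n :: nat and x assume n1: "n \<ge> 1" and hx: "mherm st n x"
    obtain r where r: "r > 0" "madd (mrs sm r (amp n e)) (mrs sm (-1) x) \<in> C n"
      using au n1 hx unfolding arch_unit_def by blast
    have "madd (mrs sm r (amp n p)) (mrs sm (-1) x) \<in> Cp sm st C e p n"
      unfolding Cp_iff
    proof (intro conjI allI impI)
      show "mherm st n (madd (mrs sm r (amp n p)) (mrs sm (-1) x))"
        by (intro mherm_madd[OF ss] mherm_mrs[OF ss] mherm_amp[OF ss] pherm hx)
      fix \<epsilon> :: real assume ep: "\<epsilon> > 0"
      have "madd (madd (madd (mrs sm r (amp n p)) (mrs sm (-1) x)) (mrs sm \<epsilon> (amp n p))) (mrs sm r (amp n (e - p)))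
        = madd (madd (mrs sm r (amp n e)) (mrs sm (-1) x)) (mrs sm \<epsilon> (amp n p))"
        by (simp add: PQ[symmetric] mrs_madd[OF cv] madd_ac)
      moreover have "madd (madd (mrs sm r (amp n e)) (mrs sm (-1) x)) (mrs sm \<epsilon> (amp n p)) \<in> C n"
        using ep by (intro C_add[OF cv mo n1] r(2) C_scale[OF cv mo n1] pC[OF n1]) auto
      ultimately show "\<exists>t>0. madd (madd (madd (mrs sm r (amp n p)) (mrs sm (-1) x)) (mrs sm \<epsilon> (amp n p))) (mrs sm t (amp n (e - p))) \<in> C n"
        using r(1) by metis
    qed
    then show "\<exists>r>0. madd (mrs sm r (amp n p)) (mrs sm (-1) x) \<in> Cp sm st C e p n" using r(1) by blast
  next
    fix n :: nat and x assume n1: "n \<ge> 1" and hx: "mherm st n x"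
      and H: "\<forall>\<epsilon>::real. \<epsilon> > 0 \<longrightarrow> madd x (mrs sm \<epsilon> (amp n p)) \<in> Cp sm st C e p n"
    show "x \<in> Cp sm st C e p n"
      unfolding Cp_iff
    proof (intro conjI allI impI)
      show "mherm st n x" by (rule hx)
      fix \<epsilon> :: real assume ep: "\<epsilon> > 0"
      have "madd x (mrs sm (\<epsilon>/2) (amp n p)) \<in> Cp sm st C e p n" using H ep by simp
      then obtain t where t: "t > 0" "madd (madd (madd x (mrs sm (\<epsilon>/2) (amp n p))) (mrs sm (\<epsilon>/2) (amp n p))) (mrs sm t (amp n (e - p))) \<in> C n"
        using ep unfolding Cp_iff by (meson half_gt_zero)
      have "madd (madd (madd x (mrs sm (\<epsilon>/2) (amp n p))) (mrs sm (\<epsilon>/2) (amp n p))) (mrs sm t (amp n (e - p)))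
         = madd (madd x (mrs sm \<epsilon> (amp n p))) (mrs sm t (amp n (e - p)))"
        by (subst (3) half) (simp add: madd_ac)
      then show "\<exists>t>0. madd (madd x (mrs sm \<epsilon> (amp n p))) (mrs sm t (amp n (e - p))) \<in> C n"
        using t by metis
    qed
  qed
  show ?thesis using MO AU by blast
qed

end
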